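(* Let $d^{AD}_n$ denote the number of signed derangements $\sigma\in D_n$ with $\ell_D(\sigma)$ even. Then: (i) for $n\ge 2$, $d^{AD}_n=n!\sum_{k=0}^{n-2}\frac{2^{n-k-2}(-1)^k}{k!}+(-1)^{n-1}(n-1)$; (ii) for $n\ge 2$, $d^{AD}_n=2n\,d^{AD}_{n-1}+(-1)^{n-1}(n^2-2n-1)$, with $d^{AD}_1=0$; (iii) for $n\ge 3$, $d^{AD}_n=(2n-1)d^{AD}_{n-1}+2(n-1)d^{AD}_{n-2}+(-1)^{n-1}(2n-3)$, with $d^{AD}_1=0$, $d^{AD}_2=1$.
   Context: $B_n$ is the set of words $\sigma=\sigma_1\cdots\sigma_n$ with $\sigma_i\in\{\pm1,\dots,\pm n\}$ and $|\sigma_1|\cdots|\sigma_n|$ a permutation of $[n]$. $\mathrm{neg}(\sigma)=\#\{i:\sigma_i<0\}$. $D_n=\{\sigma\in B_n:\mathrm{neg}(\sigma)\text{ even}\}$. A derangement is an element with $\sigma_i\neq i$ for all $i$. $\mathrm{inv}(\sigma)=\#\{(i,j):i<j,\sigma_i>\sigma_j\}$ (usual integer order), $\ell_B(\sigma)=\mathrm{inv}(\sigma)-\sum_{i:\sigma_i<0}\sigma_i$, and $\ell_D(\sigma)=\ell_B(\sigma)-\mathrm{neg}(\sigma)$. *)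

theory Defs
  imports Complex_Main
begin

text \<open>Signed permutations of [n]: a word sigma_1 ... sigma_n is encoded as a function
  nat => int, with sigma i = 0 for i outside {1..n}.\<close>

definition signed_perms :: "nat \<Rightarrow> (nat \<Rightarrow> int) set" where
  "signed_perms n = {\<sigma>. (\<forall>i. i \<notin> {1..n} \<longrightarrow> \<sigma> i = 0) \<and>
      bij_betw (\<lambda>i. nat \<bar>\<sigma> i\<bar>) {1..n} {1..n}}"

definition negc :: "nat \<Rightarrow> (nat \<Rightarrow> int) \<Rightarrow> nat" where
  "negc n \<sigma> = card {i \<in> {1..n}. \<sigma> i < 0}"

definition even_signed_perms :: "nat \<Rightarrow> (nat \<Rightarrow> int) set" where
  "even_signed_perms n = {\<sigma> \<in> signed_perms n. even (negc n \<sigma>)}"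

definition is_derangement :: "nat \<Rightarrow> (nat \<Rightarrow> int) \<Rightarrow> bool" where
  "is_derangement n \<sigma> \<longleftrightarrow> (\<forall>i \<in> {1..n}. \<sigma> i \<noteq> int i)"

definition invc :: "nat \<Rightarrow> (nat \<Rightarrow> int) \<Rightarrow> nat" where
  "invc n \<sigma> = card {(i, j). i \<in> {1..n} \<and> j \<in> {1..n} \<and> i < j \<and> \<sigma> i > \<sigma> j}"

definition lenB :: "nat \<Rightarrow> (nat \<Rightarrow> int) \<Rightarrow> int" where
  "lenB n \<sigma> = int (invc n \<sigma>) - (\<Sum>i \<in> {i \<in> {1..n}. \<sigma> i < 0}. \<sigma> i)"

definition lenD :: "nat \<Rightarrow> (nat \<Rightarrow> int) \<Rightarrow> int" where
  "lenD n \<sigma> = lenB n \<sigma> - int (negc n \<sigma>)"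

definition dAD :: "nat \<Rightarrow> nat" where
  "dAD n = card {\<sigma> \<in> even_signed_perms n. is_derangement n \<sigma> \<and> even (lenD n \<sigma>)}"

end

theory Submission
  imports Defs "HOL-Combinatorics.Permutations"
begin


definition PP :: "nat \<Rightarrow> (nat \<times> nat) set" where
  "PP n = {(i,j). i \<in> {1..n} \<and> j \<in> {1..n} \<and> i < j}"

definition SG :: "nat \<Rightarrow> (nat \<Rightarrow> int) \<Rightarrow> int" where
  "SG n f = (\<Prod>(i,j)\<in>PP n. sgn (f j - f i))"

lemma finite_PP[simp]: "finite (PP n)"
  by (rule finite_subset[of _ "{1..n} \<times> {1..n}"]) (auto simp: PP_def)

lemma prod_sign_set:
  assumes "finite A" "I \<subseteq> A"
  shows "(\<Prod>x\<in>A. if x \<in> I then -1 else 1) = ((-1::int) ^ card I)"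
proof -
  have "(\<Prod>x\<in>A. if x \<in> I then -1 else (1::int)) = (\<Prod>x\<in>A \<inter> {x. x\<in>I}. -1) * (\<Prod>x\<in>A \<inter> - {x. x\<in>I}. 1)"
    by (rule prod.If_cases) (rule assms)
  also have "A \<inter> {x. x\<in>I} = I" using assms by auto
  finally show ?thesis by simp
qed

lemma SG_invc:
  assumes "\<And>i j. i \<in> {1..n} \<Longrightarrow> j \<in> {1..n} \<Longrightarrow> i \<noteq> j \<Longrightarrow> f i \<noteq> f j"
  shows "SG n f = (-1) ^ invc n f"
proof -
  let ?I = "{(i, j). i \<in> {1..n} \<and> j \<in> {1..n} \<and> i < j \<and> f i > f j}"
  have "SG n f = (\<Prod>p\<in>PP n. if p \<in> ?I then -1 else 1)"
    unfolding SG_def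
  proof (rule prod.cong[OF refl])
    fix p assume "p \<in> PP n"
    then obtain i j where p: "p = (i,j)" "i \<in> {1..n}" "j \<in> {1..n}" "i < j" by (auto simp: PP_def)
    have "f i \<noteq> f j" using assms p by auto
    then show "(case p of (i, j) \<Rightarrow> sgn (f j - f i)) = (if p \<in> ?I then -1 else 1)"
      using p by (auto simp: sgn_if)
  qed
  also have "\<dots> = (-1) ^ card ?I"
    by (rule prod_sign_set[OF finite_PP]) (auto simp: PP_def)
  finally show ?thesis by (simp add: invc_def)
qed

lemma bij_PP:
  assumes t1: "\<And>i. i \<in> {1..n} \<Longrightarrow> \<tau> i \<in> {1..n}"
      and t2: "\<And>i. i \<in> {1..n} \<Longrightarrow> \<tau>' i \<in> {1..n}"
      and t3: "\<And>i. i \<in> {1..n} \<Longrightarrow> \<tau>' (\<tau> i) = i"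
      and t4: "\<And>i. i \<in> {1..n} \<Longrightarrow> \<tau> (\<tau>' i) = i"
  shows "bij_betw (\<lambda>(i,j). (min (\<tau> i) (\<tau> j), max (\<tau> i) (\<tau> j))) (PP n) (PP n)"
proof (rule bij_betw_byWitness[where f' = "\<lambda>(i,j). (min (\<tau>' i) (\<tau>' j), max (\<tau>' i) (\<tau>' j))"])
  show "\<forall>a\<in>PP n. (case case a of (i, j) \<Rightarrow> (min (\<tau> i) (\<tau> j), max (\<tau> i) (\<tau> j)) of
          (i, j) \<Rightarrow> (min (\<tau>' i) (\<tau>' j), max (\<tau>' i) (\<tau>' j))) = a"
  proof
    fix a assume "a \<in> PP n"
    then obtain i j where a: "a = (i,j)" "i \<in> {1..n}" "j \<in> {1..n}" "i < j" by (auto simp: PP_def)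
    have "\<tau> i \<noteq> \<tau> j" using t3 a by (metis less_irrefl)
    then show "(case case a of (i, j) \<Rightarrow> (min (\<tau> i) (\<tau> j), max (\<tau> i) (\<tau> j)) of
          (i, j) \<Rightarrow> (min (\<tau>' i) (\<tau>' j), max (\<tau>' i) (\<tau>' j))) = a"
      using a t3 by (cases "\<tau> i < \<tau> j") (auto simp: min_def max_def)
  qed
  show "\<forall>a\<in>PP n. (case case a of (i, j) \<Rightarrow> (min (\<tau>' i) (\<tau>' j), max (\<tau>' i) (\<tau>' j)) of
          (i, j) \<Rightarrow> (min (\<tau> i) (\<tau> j), max (\<tau> i) (\<tau> j))) = a"
  proof
    fix a assume "a \<in> PP n"
    then obtain i j where a: "a = (i,j)" "i \<in> {1..n}" "j \<in> {1..n}" "i < j" by (auto simp: PP_def)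
    have "\<tau>' i \<noteq> \<tau>' j" using t4 a by (metis less_irrefl)
    then show "(case case a of (i, j) \<Rightarrow> (min (\<tau>' i) (\<tau>' j), max (\<tau>' i) (\<tau>' j)) of
          (i, j) \<Rightarrow> (min (\<tau> i) (\<tau> j), max (\<tau> i) (\<tau> j))) = a"
      using a t4 by (cases "\<tau>' i < \<tau>' j") (auto simp: min_def max_def)
  qed
  show "(\<lambda>(i, j). (min (\<tau> i) (\<tau> j), max (\<tau> i) (\<tau> j))) ` PP n \<subseteq> PP n"
  proof safe
    fix i j assume "(i,j) \<in> PP n"
    then have a: "i \<in> {1..n}" "j \<in> {1..n}" "i < j" by (auto simp: PP_def)
    have "\<tau> i \<noteq> \<tau> j" using t3 a by (metis less_irrefl)
    then show "(min (\<tau> i) (\<tau> j), max (\<tau> i) (\<tau> j)) \<in> PP n"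
      using a t1[of i] t1[of j] by (auto simp: PP_def min_def max_def)
  qed
  show "(\<lambda>(i, j). (min (\<tau>' i) (\<tau>' j), max (\<tau>' i) (\<tau>' j))) ` PP n \<subseteq> PP n"
  proof safe
    fix i j assume "(i,j) \<in> PP n"
    then have a: "i \<in> {1..n}" "j \<in> {1..n}" "i < j" by (auto simp: PP_def)
    have "\<tau>' i \<noteq> \<tau>' j" using t4 a by (metis less_irrefl)
    then show "(min (\<tau>' i) (\<tau>' j), max (\<tau>' i) (\<tau>' j)) \<in> PP n"
      using a t2[of i] t2[of j] by (auto simp: PP_def min_def max_def)
  qed
qed

lemma SG_comp:
  assumes t1: "\<And>i. i \<in> {1..n} \<Longrightarrow> \<tau> i \<in> {1..n}"
      and t2: "\<And>i. i \<in> {1..n} \<Longrightarrow> \<tau>' i \<in> {1..n}"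
      and t3: "\<And>i. i \<in> {1..n} \<Longrightarrow> \<tau>' (\<tau> i) = i"
      and t4: "\<And>i. i \<in> {1..n} \<Longrightarrow> \<tau> (\<tau>' i) = i"
  shows "SG n (\<lambda>i. f (\<tau> i)) = SG n f * SG n (\<lambda>i. int (\<tau>' i))"
proof -
  define G where "G = (\<lambda>(x::nat,y::nat). sgn (f y - f x) * sgn (int (\<tau>' y) - int (\<tau>' x)))"
  have Gsym: "G (x,y) = G (y,x)" for x y
  proof -
    have m: "sgn (a - b) = - sgn (b - a)" for a b :: int by (simp add: sgn_if)
    show ?thesis unfolding G_def by (simp add: m[of "f y"] m[of "int (\<tau>' y)"])
  qed
  let ?phi = "\<lambda>(i,j). (min (\<tau> i) (\<tau> j), max (\<tau> i) (\<tau> j))"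
  have "SG n f * SG n (\<lambda>i. int (\<tau>' i)) = (\<Prod>p\<in>PP n. G p)"
    unfolding SG_def G_def by (simp add: prod.distrib[symmetric] case_prod_beta)
  also have "\<dots> = (\<Prod>p\<in>PP n. G (?phi p))"
    using prod.reindex_bij_betw[OF bij_PP[OF assms], of G] by simp
  also have "\<dots> = (\<Prod>(i,j)\<in>PP n. sgn (f (\<tau> j) - f (\<tau> i)))"
  proof (rule prod.cong[OF refl])
    fix p assume "p \<in> PP n"
    then obtain i j where a: "p = (i,j)" "i \<in> {1..n}" "j \<in> {1..n}" "i < j" by (auto simp: PP_def)
    have "G (?phi p) = G (\<tau> i, \<tau> j)"
      using a Gsym by (cases "\<tau> i \<le> \<tau> j") (auto simp: min_def max_def)
    also have "\<dots> = sgn (f (\<tau> j) - f (\<tau> i))"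
      using a t3 by (simp add: G_def)
    finally show "G (?phi p) = (case p of (i,j) \<Rightarrow> sgn (f (\<tau> j) - f (\<tau> i)))" using a by simp
  qed
  finally show ?thesis by (simp add: SG_def)
qed

lemma SG_transpose:
  assumes ab: "a < b" "a \<in> {1..n}" "b \<in> {1..n}"
  shows "SG n (\<lambda>i. int (transpose a b i)) = -1"
proof -
  let ?g = "\<lambda>i. int (transpose a b i)"
  have "SG n ?g = (-1) ^ invc n ?g"
    by (rule SG_invc) (auto simp: transpose_def)
  moreover
  let ?I = "{(i, j). i \<in> {1..n} \<and> j \<in> {1..n} \<and> i < j \<and> ?g i > ?g j}"
  have I: "?I = insert (a,b) ((\<lambda>j. (a,j)) ` {a<..<b} \<union> (\<lambda>i. (i,b)) ` {a<..<b})"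
    using ab by (auto simp: transpose_def split: if_splits)
  have C: "card ((\<lambda>j. (a,j)) ` {a<..<b} \<union> (\<lambda>i. (i,b)) ` {a<..<b}) = card ((\<lambda>j. (a,j)) ` {a<..<b}) + card ((\<lambda>i. (i,b)) ` {a<..<b})"
    by (rule card_Un_disjoint) auto
  have "card ?I = Suc ((b - Suc a) + (b - Suc a))"
    unfolding I using C by (subst card_insert_disjoint) (auto simp: card_image inj_on_def)
  ultimately show ?thesis by (simp add: invc_def)
qed

lemma SG_id: "SG n (\<lambda>i. int i) = 1"
  unfolding SG_def by (rule prod.neutral) (auto simp: PP_def)

lemma sum_SG:
  assumes X: "X \<subseteq> {1..n}"
  shows "(\<Sum>\<pi>\<in>{\<pi>. \<pi> permutes X}. SG n (\<lambda>i. int (\<pi> i))) = (if card X \<le> 1 then 1 else 0)"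
proof (cases "card X \<le> 1")
  case True
  have fX: "finite X" using X finite_subset by blast
  then have "\<forall>a1\<in>X. \<forall>a2\<in>X. a1 = a2" using True card_le_Suc0_iff_eq by auto
  then have "X = {} \<or> (\<exists>a. X = {a})" by blast
  then have "{\<pi>. \<pi> permutes X} = {id}" by auto
  then show ?thesis using True SG_id by simp
next
  case False
  have fX: "finite X" using X finite_subset by blast
  then obtain a0 b0 where ab0: "a0 \<in> X" "b0 \<in> X" "a0 \<noteq> b0"
    using False card_le_Suc0_iff_eq[OF fX] by auto
  define a where "a = min a0 b0"
  define b where "b = max a0 b0"
  have ab: "a \<in> X" "b \<in> X" "a < b" using ab0 by (auto simp: a_def b_def min_def max_def)
  let ?t = "transpose a b"
  let ?h = "\<lambda>\<pi>. \<pi> \<circ> ?t"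
  have tt: "?t (?t i) = i" for i by (simp add: transpose_def)
  have tperm: "?t permutes X" using ab by (simp add: permutes_swap_id)
  have hp: "?h \<pi> permutes X" if "\<pi> permutes X" for \<pi>
    using permutes_compose[OF tperm that] .
  have bij: "bij_betw ?h {\<pi>. \<pi> permutes X} {\<pi>. \<pi> permutes X}"
    by (rule bij_betw_byWitness[where f' = ?h]) (use hp in \<open>auto simp: o_def tt\<close>)
  let ?f = "\<lambda>\<pi>. SG n (\<lambda>i. int (\<pi> i))"
  have "sum ?f {\<pi>. \<pi> permutes X} = sum (?f \<circ> ?h) {\<pi>. \<pi> permutes X}"
    using sum.reindex_bij_betw[OF bij, of ?f] by simp
  also have "\<dots> = sum (\<lambda>\<pi>. - ?f \<pi>) {\<pi>. \<pi> permutes X}"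
  proof (rule sum.cong[OF refl])
    fix \<pi> assume "\<pi> \<in> {\<pi>. \<pi> permutes X}"
    have tin: "?t i \<in> {1..n}" if "i \<in> {1..n}" for i
      using that ab X by (auto simp: transpose_def)
    have "(?f \<circ> ?h) \<pi> = SG n (\<lambda>i. (\<lambda>i. int (\<pi> i)) (?t i))" by (simp add: o_def)
    also have "\<dots> = ?f \<pi> * SG n (\<lambda>i. int (?t i))"
      by (rule SG_comp[OF tin tin tt tt])
    also have "SG n (\<lambda>i. int (?t i)) = -1"
      using ab X by (intro SG_transpose) auto
    finally show "(?f \<circ> ?h) \<pi> = - ?f \<pi>" by simp
  qed
  also have "\<dots> = - sum ?f {\<pi>. \<pi> permutes X}" by (simp add: sum_negf)
  finally show ?thesis using False by simp
qed

lemma sgn_pair: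
  fixes x y :: int
  assumes "\<bar>x\<bar> \<noteq> \<bar>y\<bar>"
  shows "sgn (y - x) = sgn (\<bar>y\<bar> - \<bar>x\<bar>) * sgn (x + y)"
  using assms by (auto simp: sgn_if abs_if)

lemma card_smaller:
  assumes bij: "bij_betw g {1..n} {1..(n::nat)}" and v: "v \<in> {1..n}"
  shows "card {j \<in> {1..n}. g j < v} = v - 1"
proof -
  have inj: "inj_on g {j \<in> {1..n}. g j < v}"
    using bij by (rule inj_on_subset[OF bij_betw_imp_inj_on]) auto
  have "g ` {j \<in> {1..n}. g j < v} = {k \<in> {1..n}. k < v}"
  proof
    show "g ` {j \<in> {1..n}. g j < v} \<subseteq> {k \<in> {1..n}. k < v}" using bij by (auto simp: bij_betw_def)
    show "{k \<in> {1..n}. k < v} \<subseteq> g ` {j \<in> {1..n}. g j < v}"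
    proof
      fix x assume x: "x \<in> {k \<in> {1..n}. k < v}"
      then have "x \<in> g ` {1..n}" using bij by (simp add: bij_betw_def)
      then obtain y where "y \<in> {1..n}" "x = g y" by auto
      then show "x \<in> g ` {j \<in> {1..n}. g j < v}" using x by auto
    qed
  qed
  also have "\<dots> = {1..<v}" using v by auto
  finally show ?thesis using card_image[OF inj] by simp
qed



lemma signed_parity:
  assumes sp: "\<sigma> \<in> signed_perms n"
  shows "(if even (lenD n \<sigma>) then 1 else -1) = SG n (\<lambda>i. \<bar>\<sigma> i\<bar>)"
proof -
  let ?S = "{1..n}"
  let ?g = "\<lambda>i. nat \<bar>\<sigma> i\<bar>"
  have bij: "bij_betw ?g ?S ?S" using sp by (simp add: signed_perms_def)
  have gS: "?g i \<in> ?S" if "i \<in> ?S" for i using bij_betw_apply[OF bij that] .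
  have ab1: "\<bar>\<sigma> i\<bar> \<ge> 1" if "i \<in> ?S" for i using gS[OF that] by auto
  have inj: "\<bar>\<sigma> i\<bar> \<noteq> \<bar>\<sigma> j\<bar>" if "i \<in> ?S" "j \<in> ?S" "i \<noteq> j" for i j
  proof
    assume "\<bar>\<sigma> i\<bar> = \<bar>\<sigma> j\<bar>"
    then have "?g i = ?g j" by simp
    then have "i = j" using inj_onD[OF bij_betw_imp_inj_on[OF bij] _ that(1) that(2)] by blast
    then show False using that(3) by blast
  qed
  define Neg where "Neg = {i \<in> ?S. \<sigma> i < 0}"
  define C where "C = {p \<in> PP n. \<sigma> (fst p) + \<sigma> (snd p) < 0}"
  define D where "D = Sigma Neg (\<lambda>i. {j \<in> ?S. ?g j < ?g i})"
  have finNeg: "finite Neg" by (simp add: Neg_def)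
  have s1: "SG n \<sigma> = (-1) ^ invc n \<sigma>"
    by (rule SG_invc) (use inj in force)
  have s2: "SG n \<sigma> = SG n (\<lambda>i. \<bar>\<sigma> i\<bar>) * (\<Prod>p\<in>PP n. sgn (\<sigma> (fst p) + \<sigma> (snd p)))"
    unfolding SG_def prod.distrib[symmetric]
  proof (rule prod.cong[OF refl])
    fix p assume "p \<in> PP n"
    then obtain i j where a: "p = (i,j)" "i \<in> ?S" "j \<in> ?S" "i < j" by (auto simp: PP_def)
    show "(case p of (i, j) \<Rightarrow> sgn (\<sigma> j - \<sigma> i)) =
          (case p of (i, j) \<Rightarrow> sgn (\<bar>\<sigma> j\<bar> - \<bar>\<sigma> i\<bar>)) * sgn (\<sigma> (fst p) + \<sigma> (snd p))"
      using a sgn_pair[OF inj[of i j]] by simp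
  qed
  have s3: "(\<Prod>p\<in>PP n. sgn (\<sigma> (fst p) + \<sigma> (snd p))) = (-1) ^ card C"
  proof -
    have "(\<Prod>p\<in>PP n. sgn (\<sigma> (fst p) + \<sigma> (snd p))) = (\<Prod>p\<in>PP n. if p \<in> C then -1 else 1)"
    proof (rule prod.cong[OF refl])
      fix p assume "p \<in> PP n"
      then obtain i j where a: "p = (i,j)" "i \<in> ?S" "j \<in> ?S" "i < j" by (auto simp: PP_def)
      have "\<sigma> i + \<sigma> j \<noteq> 0"
      proof
        assume "\<sigma> i + \<sigma> j = 0"
        then have "\<sigma> j = - \<sigma> i" by simp
        then show False using inj[of i j] a by simp
      qed
      then show "sgn (\<sigma> (fst p) + \<sigma> (snd p)) = (if p \<in> C then -1 else 1)"
        using a \<open>p \<in> PP n\<close> by (auto simp: C_def sgn_if)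
    qed
    also have "\<dots> = (-1) ^ card C" by (rule prod_sign_set) (auto simp: C_def)
    finally show ?thesis .
  qed
  have cD: "card D = (\<Sum>i\<in>Neg. ?g i - 1)"
  proof -
    have "card D = (\<Sum>i\<in>Neg. card {j \<in> ?S. ?g j < ?g i})"
      unfolding D_def by (rule card_SigmaI) (auto simp: finNeg)
    also have "\<dots> = (\<Sum>i\<in>Neg. ?g i - 1)"
      by (rule sum.cong[OF refl]) (rule card_smaller[OF bij gS], auto simp: Neg_def)
    finally show ?thesis .
  qed
  have cCD: "card D = card C"
  proof (rule bij_betw_same_card)
    show "bij_betw (\<lambda>(i,j). (min i j, max i j)) D C"
    proof (rule bij_betw_byWitness[where f' = "\<lambda>(i,j). if \<bar>\<sigma> i\<bar> > \<bar>\<sigma> j\<bar> then (i,j) else (j,i)"])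
      show "\<forall>a\<in>D. (case case a of (i, j) \<Rightarrow> (min i j, max i j) of
             (i, j) \<Rightarrow> if \<bar>\<sigma> j\<bar> < \<bar>\<sigma> i\<bar> then (i, j) else (j, i)) = a"
      proof
        fix a assume "a \<in> D"
        then obtain i j where a: "a = (i,j)" "\<bar>\<sigma> j\<bar> < \<bar>\<sigma> i\<bar>" by (auto simp: D_def)
        then show "(case case a of (i, j) \<Rightarrow> (min i j, max i j) of
             (i, j) \<Rightarrow> if \<bar>\<sigma> j\<bar> < \<bar>\<sigma> i\<bar> then (i, j) else (j, i)) = a"
          by (cases "i \<le> j") (auto simp: min_def max_def)
      qed
      show "\<forall>a\<in>C. (case case a of (i, j) \<Rightarrow> if \<bar>\<sigma> j\<bar> < \<bar>\<sigma> i\<bar> then (i, j) else (j, i) of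
             (i, j) \<Rightarrow> (min i j, max i j)) = a"
      proof
        fix a assume "a \<in> C"
        then obtain i j where a: "a = (i,j)" "i < j" by (auto simp: C_def PP_def)
        then show "(case case a of (i, j) \<Rightarrow> if \<bar>\<sigma> j\<bar> < \<bar>\<sigma> i\<bar> then (i, j) else (j, i) of
             (i, j) \<Rightarrow> (min i j, max i j)) = a"
          by (auto simp: min_def max_def)
      qed
      show "(\<lambda>(i, j). (min i j, max i j)) ` D \<subseteq> C"
      proof (rule image_subsetI)
        fix p assume "p \<in> D"
        then obtain i j where p: "p = (i,j)" by (cases p)
        from \<open>p \<in> D\<close> have a: "i \<in> ?S" "j \<in> ?S" "\<sigma> i < 0" "\<bar>\<sigma> j\<bar> < \<bar>\<sigma> i\<bar>"
          unfolding p by (auto simp: D_def Neg_def)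
        then have "i \<noteq> j" by auto
        moreover have "\<sigma> i + \<sigma> j < 0" using a by (auto simp: abs_if split: if_splits)
        ultimately show "(case p of (i,j) \<Rightarrow> (min i j, max i j)) \<in> C" using a unfolding p case_prod_conv
          by (cases "i < j") (auto simp: C_def PP_def min_def max_def add.commute)
      qed
      show "(\<lambda>(i, j). if \<bar>\<sigma> j\<bar> < \<bar>\<sigma> i\<bar> then (i, j) else (j, i)) ` C \<subseteq> D"
      proof (rule image_subsetI)
        fix p assume "p \<in> C"
        then obtain i j where p: "p = (i,j)" by (cases p)
        have a: "i \<in> ?S" "j \<in> ?S" "i < j" "\<sigma> i + \<sigma> j < 0" using \<open>p \<in> C\<close> p by (auto simp: C_def PP_def)
        have ne: "\<bar>\<sigma> i\<bar> \<noteq> \<bar>\<sigma> j\<bar>" using inj[of i j] a(1,2,3) by simp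
        show "(case p of (i, j) \<Rightarrow> if \<bar>\<sigma> j\<bar> < \<bar>\<sigma> i\<bar> then (i, j) else (j, i)) \<in> D"
        proof (cases "\<bar>\<sigma> j\<bar> < \<bar>\<sigma> i\<bar>")
          case True
          then have "\<sigma> i < 0" using a by (auto simp: abs_if split: if_splits)
          then show ?thesis using True a p by (auto simp: D_def Neg_def nat_less_eq_zless)
        next
          case False
          then have lt: "\<bar>\<sigma> i\<bar> < \<bar>\<sigma> j\<bar>" using ne by linarith
          then have "\<sigma> j < 0" using a by (auto simp: abs_if split: if_splits)
          then show ?thesis using False lt a p by (auto simp: D_def Neg_def nat_less_eq_zless)
        qed
      qed
    qed
  qed
  have sumNeg: "(\<Sum>i\<in>Neg. \<bar>\<sigma> i\<bar>) = int (card C) + int (card Neg)"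
  proof -
    have "(\<Sum>i\<in>Neg. \<bar>\<sigma> i\<bar>) = (\<Sum>i\<in>Neg. int (?g i - 1) + 1)"
      by (rule sum.cong[OF refl]) (use ab1 in \<open>auto simp: Neg_def\<close>)
    also have "\<dots> = int (\<Sum>i\<in>Neg. ?g i - 1) + int (card Neg)"
      by (simp add: sum.distrib)
    finally show ?thesis using cD cCD by simp
  qed
  have lenD: "lenD n \<sigma> = int (invc n \<sigma>) + int (card C)"
  proof -
    have "(\<Sum>i\<in>Neg. \<sigma> i) = - (\<Sum>i\<in>Neg. \<bar>\<sigma> i\<bar>)"
      by (simp add: sum_negf[symmetric] Neg_def)
    then show ?thesis using sumNeg
      unfolding lenD_def lenB_def negc_def Neg_def[symmetric] by simp
  qed
  have "SG n (\<lambda>i. \<bar>\<sigma> i\<bar>) = (-1) ^ (invc n \<sigma> + card C)"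
  proof -
    have "(-1::int) ^ invc n \<sigma> = SG n (\<lambda>i. \<bar>\<sigma> i\<bar>) * (-1) ^ card C" using s1 s2 s3 by simp
    then have "(-1::int) ^ invc n \<sigma> * (-1) ^ card C = SG n (\<lambda>i. \<bar>\<sigma> i\<bar>) * ((-1) ^ card C * (-1) ^ card C)"
      by simp
    also have "(-1::int) ^ card C * (-1) ^ card C = 1"
      by (simp add: power_add[symmetric])
    finally show ?thesis by (simp add: power_add)
  qed
  moreover have "even (lenD n \<sigma>) \<longleftrightarrow> even (invc n \<sigma> + card C)"
    using lenD by (metis even_of_nat of_nat_add)
  ultimately show ?thesis by (cases "even (invc n \<sigma> + card C)") auto
qed



definition mk :: "nat \<Rightarrow> (nat \<Rightarrow> nat) \<Rightarrow> nat set \<Rightarrow> (nat \<Rightarrow> int)" where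
  "mk n \<pi> N = (\<lambda>i. if i \<in> {1..n} then (if i \<in> N then - int (\<pi> i) else int (\<pi> i)) else 0)"

lemma perm_in: "\<pi> permutes {1..n} \<Longrightarrow> i \<in> {1..n} \<Longrightarrow> \<pi> i \<in> {1..n}"
  by (rule permutes_in_image[THEN iffD2])

lemma bij_mk:
  "bij_betw (\<lambda>(\<pi>,N). mk n \<pi> N) ({\<pi>. \<pi> permutes {1..n}} \<times> Pow {1..n}) (signed_perms n)"
proof (rule bij_betw_byWitness[where f' = "\<lambda>\<sigma>. (\<lambda>i. if i \<in> {1..n} then nat \<bar>\<sigma> i\<bar> else i, {i \<in> {1..n}. \<sigma> i < 0})"])
  show "\<forall>a\<in>{\<pi>. \<pi> permutes {1..n}} \<times> Pow {1..n}.
     (\<lambda>\<sigma>. (\<lambda>i. if i \<in> {1..n} then nat \<bar>\<sigma> i\<bar> else i, {i \<in> {1..n}. \<sigma> i < 0}))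
      (case a of (\<pi>, N) \<Rightarrow> mk n \<pi> N) = a"
  proof
    fix a assume "a \<in> {\<pi>. \<pi> permutes {1..n}} \<times> Pow {1..n}"
    then obtain \<pi> N where a: "a = (\<pi>,N)" "\<pi> permutes {1..n}" "N \<subseteq> {1..n}" by auto
    have pin: "\<pi> i \<in> {1..n}" if "i \<in> {1..n}" for i using perm_in[OF a(2) that] .
    have "(\<lambda>i. if i \<in> {1..n} then nat \<bar>mk n \<pi> N i\<bar> else i) = \<pi>"
    proof
      fix i show "(if i \<in> {1..n} then nat \<bar>mk n \<pi> N i\<bar> else i) = \<pi> i"
        using permutes_not_in[OF a(2), of i] by (auto simp: mk_def)
    qed
    moreover have "{i \<in> {1..n}. mk n \<pi> N i < 0} = N"
    proof -
      have "mk n \<pi> N i < 0 \<longleftrightarrow> i \<in> N" if "i \<in> {1..n}" for i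
        using pin[OF that] that by (auto simp: mk_def)
      then show ?thesis using a(3) by auto
    qed
    ultimately show "(\<lambda>\<sigma>. (\<lambda>i. if i \<in> {1..n} then nat \<bar>\<sigma> i\<bar> else i, {i \<in> {1..n}. \<sigma> i < 0}))
      (case a of (\<pi>, N) \<Rightarrow> mk n \<pi> N) = a" unfolding a(1) case_prod_conv by simp
  qed
  show "\<forall>a'\<in>signed_perms n.
       (case (\<lambda>i. if i \<in> {1..n} then nat \<bar>a' i\<bar> else i, {i \<in> {1..n}. a' i < 0}) of
        (\<pi>, N) \<Rightarrow> mk n \<pi> N) = a'"
  proof
    fix \<sigma> assume s: "\<sigma> \<in> signed_perms n"
    have z: "\<sigma> i = 0" if "i \<notin> {1..n}" for i using s that by (simp add: signed_perms_def)
    show "(case (\<lambda>i. if i \<in> {1..n} then nat \<bar>\<sigma> i\<bar> else i, {i \<in> {1..n}. \<sigma> i < 0}) of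
        (\<pi>, N) \<Rightarrow> mk n \<pi> N) = \<sigma>"
    proof
      fix i show "(case (\<lambda>i. if i \<in> {1..n} then nat \<bar>\<sigma> i\<bar> else i, {i \<in> {1..n}. \<sigma> i < 0}) of
        (\<pi>, N) \<Rightarrow> mk n \<pi> N) i = \<sigma> i"
        using z[of i] by (auto simp: mk_def)
    qed
  qed
  show "(\<lambda>(\<pi>, N). mk n \<pi> N) ` ({\<pi>. \<pi> permutes {1..n}} \<times> Pow {1..n}) \<subseteq> signed_perms n"
  proof (rule image_subsetI)
    fix a assume "a \<in> {\<pi>. \<pi> permutes {1..n}} \<times> Pow {1..n}"
    then obtain \<pi> N where a: "a = (\<pi>,N)" "\<pi> permutes {1..n}" "N \<subseteq> {1..n}" by auto
    have "bij_betw (\<lambda>i. nat \<bar>mk n \<pi> N i\<bar>) {1..n} {1..n}"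
    proof (rule bij_betw_cong[THEN iffD1])
      show "bij_betw \<pi> {1..n} {1..n}" using permutes_imp_bij[OF a(2)] .
      show "\<And>i. i \<in> {1..n} \<Longrightarrow> \<pi> i = nat \<bar>mk n \<pi> N i\<bar>" by (auto simp: mk_def)
    qed
    then show "(case a of (\<pi>, N) \<Rightarrow> mk n \<pi> N) \<in> signed_perms n"
      using a(1) by (auto simp: signed_perms_def mk_def)
  qed
  show "(\<lambda>\<sigma>. (\<lambda>i. if i \<in> {1..n} then nat \<bar>\<sigma> i\<bar> else i, {i \<in> {1..n}. \<sigma> i < 0})) ` signed_perms n
    \<subseteq> {\<pi>. \<pi> permutes {1..n}} \<times> Pow {1..n}"
  proof (rule image_subsetI)
    fix \<sigma> assume s: "\<sigma> \<in> signed_perms n"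
    have "(\<lambda>i. if i \<in> {1..n} then nat \<bar>\<sigma> i\<bar> else i) permutes {1..n}"
    proof (rule bij_imp_permutes)
      show "bij_betw (\<lambda>i. if i \<in> {1..n} then nat \<bar>\<sigma> i\<bar> else i) {1..n} {1..n}"
      proof (rule bij_betw_cong[THEN iffD1])
        show "bij_betw (\<lambda>i. nat \<bar>\<sigma> i\<bar>) {1..n} {1..n}" using s by (simp add: signed_perms_def)
      qed simp
    qed auto
    then show "(\<lambda>i. if i \<in> {1..n} then nat \<bar>\<sigma> i\<bar> else i, {i \<in> {1..n}. \<sigma> i < 0})
         \<in> {\<pi>. \<pi> permutes {1..n}} \<times> Pow {1..n}" by auto
  qed
qed

lemma finite_signed_perms: "finite (signed_perms n)"
  using bij_betw_finite[OF bij_mk] finite_permutations[of "{1..n}"] by auto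

lemma mk_props:
  assumes p: "\<pi> permutes {1..n}" and N: "N \<subseteq> {1..n}"
  shows "negc n (mk n \<pi> N) = card N"
    and "is_derangement n (mk n \<pi> N) \<longleftrightarrow> (\<forall>i \<in> {1..n} - N. \<pi> i \<noteq> i)"
    and "SG n (\<lambda>i. \<bar>mk n \<pi> N i\<bar>) = SG n (\<lambda>i. int (\<pi> i))"
proof -
  have pin: "\<pi> i \<in> {1..n}" if "i \<in> {1..n}" for i using perm_in[OF p that] .
  have "{i \<in> {1..n}. mk n \<pi> N i < 0} = N"
  proof -
    have "mk n \<pi> N i < 0 \<longleftrightarrow> i \<in> N" if "i \<in> {1..n}" for i
      using pin[OF that] that by (auto simp: mk_def)
    then show ?thesis using N by auto
  qed
  then show "negc n (mk n \<pi> N) = card N" by (simp add: negc_def)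
  show "is_derangement n (mk n \<pi> N) \<longleftrightarrow> (\<forall>i \<in> {1..n} - N. \<pi> i \<noteq> i)"
    unfolding is_derangement_def
  proof (intro iffI ballI)
    fix i assume H: "\<forall>i\<in>{1..n}. mk n \<pi> N i \<noteq> int i" and i: "i \<in> {1..n} - N"
    then show "\<pi> i \<noteq> i" using H[rule_format, of i] by (auto simp: mk_def)
  next
    fix i assume H: "\<forall>i\<in>{1..n} - N. \<pi> i \<noteq> i" and i: "i \<in> {1..n}"
    show "mk n \<pi> N i \<noteq> int i"
    proof (cases "i \<in> N")
      case True then show ?thesis using i by (auto simp: mk_def)
    next
      case False then show ?thesis using i H by (auto simp: mk_def)
    qed
  qed
  show "SG n (\<lambda>i. \<bar>mk n \<pi> N i\<bar>) = SG n (\<lambda>i. int (\<pi> i))"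
    unfolding SG_def by (rule prod.cong[OF refl]) (auto simp: PP_def mk_def)
qed



lemma prod_indicator:
  assumes "finite M"
  shows "(\<Prod>i\<in>M. if Q i then 1 else (0::int)) = (if \<forall>i\<in>M. Q i then 1 else 0)"
proof (cases "\<forall>i\<in>M. Q i")
  case True then show ?thesis by (simp add: prod.neutral)
next
  case False
  then obtain i where "i \<in> M" "\<not> Q i" by auto
  then show ?thesis using assms False by (subst prod_zero) auto
qed

lemma indicator_expand:
  assumes "finite M"
  shows "(if \<forall>i\<in>M. \<not> Q i then 1 else (0::int)) =
         (\<Sum>K\<in>Pow M. (-1) ^ card K * (if \<forall>i\<in>K. Q i then 1 else 0))"
proof -
  have "(\<Prod>i\<in>M. (- (if Q i then 1 else 0)) + (1::int)) =
        (\<Sum>X\<in>Pow M. (\<Prod>i\<in>X. - (if Q i then 1 else 0)) * (\<Prod>i\<in>M-X. 1))"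
    by (rule prod_add[OF assms])
  also have "\<dots> = (\<Sum>K\<in>Pow M. (-1) ^ card K * (if \<forall>i\<in>K. Q i then 1 else 0))"
  proof (rule sum.cong[OF refl])
    fix X assume X: "X \<in> Pow M"
    then have fX: "finite X" using assms finite_subset by auto
    have "(\<Prod>i\<in>X. - (if Q i then 1 else (0::int))) = (\<Prod>i\<in>X. (-1) * (if Q i then 1 else 0))" by simp
    also have "\<dots> = (-1) ^ card X * (\<Prod>i\<in>X. if Q i then 1 else 0)"
      unfolding prod.distrib prod_constant ..
    also have "\<dots> = (-1) ^ card X * (if \<forall>i\<in>X. Q i then 1 else 0)"
      using prod_indicator[OF fX] by simp
    finally show "(\<Prod>i\<in>X. - (if Q i then 1 else 0)) * (\<Prod>i\<in>M-X. 1) =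
        (-1::int) ^ card X * (if \<forall>i\<in>X. Q i then 1 else 0)" by simp
  qed
  finally have e: "(\<Prod>i\<in>M. (- (if Q i then 1 else 0)) + (1::int)) =
      (\<Sum>K\<in>Pow M. (-1) ^ card K * (if \<forall>i\<in>K. Q i then 1 else 0))" .
  have "(\<Prod>i\<in>M. (- (if Q i then 1 else 0)) + (1::int)) = (\<Prod>i\<in>M. if \<not> Q i then 1 else 0)"
    by (rule prod.cong) auto
  also have "\<dots> = (if \<forall>i\<in>M. \<not> Q i then 1 else 0)" by (rule prod_indicator[OF assms])
  finally show ?thesis using e by simp
qed

lemma permutes_fix:
  "{\<pi>. \<pi> permutes S \<and> (\<forall>i\<in>K. \<pi> i = i)} = {\<pi>. \<pi> permutes (S - K)}"
  unfolding permutes_def by auto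

lemma sum_perm_fix:
  assumes K: "K \<subseteq> {1..n}"
  shows "(\<Sum>\<pi>\<in>{\<pi>. \<pi> permutes {1..n}}. if \<forall>i\<in>K. \<pi> i = i then 1 + SG n (\<lambda>i. int (\<pi> i)) else 0)
       = int (fact (n - card K)) + (if n - card K \<le> 1 then 1 else 0)"
proof -
  have fin: "finite {\<pi>. \<pi> permutes {1..n}}" by (rule finite_permutations) simp
  have cK: "card ({1..n} - K) = n - card K"
    using K by (simp add: card_Diff_subset finite_subset)
  have "(\<Sum>\<pi>\<in>{\<pi>. \<pi> permutes {1..n}}. if \<forall>i\<in>K. \<pi> i = i then 1 + SG n (\<lambda>i. int (\<pi> i)) else 0)
      = (\<Sum>\<pi>\<in>{\<pi> \<in> {\<pi>. \<pi> permutes {1..n}}. \<forall>i\<in>K. \<pi> i = i}. 1 + SG n (\<lambda>i. int (\<pi> i)))"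
    by (rule sum.inter_filter[OF fin, symmetric])
  also have "{\<pi> \<in> {\<pi>. \<pi> permutes {1..n}}. \<forall>i\<in>K. \<pi> i = i} = {\<pi>. \<pi> permutes ({1..n} - K)}"
    using permutes_fix[of "{1..n}" K] by auto
  also have "(\<Sum>\<pi>\<in>{\<pi>. \<pi> permutes ({1..n} - K)}. 1 + SG n (\<lambda>i. int (\<pi> i)))
      = int (card {\<pi>. \<pi> permutes ({1..n} - K)}) + (\<Sum>\<pi>\<in>{\<pi>. \<pi> permutes ({1..n} - K)}. SG n (\<lambda>i. int (\<pi> i)))"
    by (simp add: sum.distrib)
  also have "card {\<pi>. \<pi> permutes ({1..n} - K)} = fact (n - card K)"
    using card_permutations[OF cK] by simp
  also have "(\<Sum>\<pi>\<in>{\<pi>. \<pi> permutes ({1..n} - K)}. SG n (\<lambda>i. int (\<pi> i))) = (if n - card K \<le> 1 then 1 else 0)"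
    using sum_SG[of "{1..n} - K" n] cK by auto
  finally show ?thesis by simp
qed

lemma sum_even_subsets:
  assumes "finite T"
  shows "(\<Sum>N\<in>Pow T. 1 + (-1) ^ card N) = (2::int) ^ card T + 0 ^ card T"
proof -
  have "(\<Prod>i\<in>T. (-1) + (1::int)) = (\<Sum>X\<in>Pow T. (\<Prod>i\<in>X. -1) * (\<Prod>i\<in>T-X. 1))"
    by (rule prod_add[OF assms])
  then have "(\<Sum>X\<in>Pow T. (-1::int) ^ card X) = 0 ^ card T" by simp
  moreover have "(\<Sum>X\<in>Pow T. (1::int)) = 2 ^ card T" using assms by (simp add: card_Pow)
  ultimately show ?thesis by (simp add: sum.distrib)
qed

lemma sum_Pow_card:
  "(\<Sum>K\<in>Pow {1..n}. h (card K)) = (\<Sum>k=0..n. of_nat (n choose k) * (h k :: int))"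
proof -
  have "(\<Sum>k\<in>{0..n}. sum (\<lambda>K. h (card K)) {K. K \<in> Pow {1..n} \<and> card K = k}) = (\<Sum>K\<in>Pow {1..n}. h (card K))"
  proof (rule sum.group)
    show "card ` Pow {1..n} \<subseteq> {0..n}"
    proof (rule image_subsetI)
      fix K assume "K \<in> Pow {1..n}"
      then have "card K \<le> card {1..n}" by (intro card_mono) auto
      then show "card K \<in> {0..n}" by simp
    qed
  qed auto
  note G = this
  have E: "sum (\<lambda>K. h (card K)) {K. K \<in> Pow {1..n} \<and> card K = k} = of_nat (n choose k) * h k" for k
  proof -
    have "sum (\<lambda>K. h (card K)) {K. K \<in> Pow {1..n} \<and> card K = k} = sum (\<lambda>K. h k) {K. K \<subseteq> {1..n} \<and> card K = k}"
      by (rule sum.cong) auto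
    also have "\<dots> = of_nat (card {K. K \<subseteq> {1..n} \<and> card K = k}) * h k" by simp
    also have "card {K. K \<subseteq> {1..n} \<and> card K = k} = n choose k" using n_subsets[of "{1..n}" k] by simp
    finally show ?thesis .
  qed
  have "(\<Sum>K\<in>Pow {1..n}. h (card K)) = (\<Sum>k\<in>{0..n}. sum (\<lambda>K. h (card K)) {K. K \<in> Pow {1..n} \<and> card K = k})"
    using G by simp
  also have "\<dots> = (\<Sum>k=0..n. of_nat (n choose k) * (h k :: int))"
    by (rule sum.cong[OF refl]) (rule E)
  finally show ?thesis .
qed



lemma swap_disjoint:
  assumes "finite S"
  shows "(\<Sum>N\<in>Pow S. \<Sum>K\<in>Pow (S - N). f N K) = (\<Sum>K\<in>Pow S. \<Sum>N\<in>Pow (S - K). (f N K :: int))"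
proof -
  have P: "Pow (S - A) = {B \<in> Pow S. B \<inter> A = {}}" for A by auto
  have fP: "finite (Pow S)" using assms by simp
  have "(\<Sum>N\<in>Pow S. \<Sum>K\<in>Pow (S - N). f N K) = (\<Sum>N\<in>Pow S. \<Sum>K\<in>Pow S. if K \<inter> N = {} then f N K else 0)"
    unfolding P by (intro sum.cong refl sum.inter_filter[OF fP])
  also have "\<dots> = (\<Sum>K\<in>Pow S. \<Sum>N\<in>Pow S. if K \<inter> N = {} then f N K else 0)"
    by (rule sum.swap)
  also have "\<dots> = (\<Sum>K\<in>Pow S. \<Sum>N\<in>Pow (S - K). f N K)"
  proof (rule sum.cong[OF refl])
    fix K
    have "(\<Sum>N\<in>Pow S. if K \<inter> N = {} then f N K else 0) = (\<Sum>N\<in>Pow S. if N \<inter> K = {} then f N K else 0)"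
      by (simp add: Int_commute)
    also have "\<dots> = sum (\<lambda>N. f N K) {B \<in> Pow S. B \<inter> K = {}}"
      by (rule sum.inter_filter[OF fP, symmetric])
    also have "{B \<in> Pow S. B \<inter> K = {}} = Pow (S - K)" by auto
    finally show "(\<Sum>N\<in>Pow S. if K \<inter> N = {} then f N K else 0) = (\<Sum>N\<in>Pow (S - K). f N K)" .
  qed
  finally show ?thesis .
qed

definition wt :: "nat \<Rightarrow> nat \<Rightarrow> int" where
  "wt n k = int (fact (n - k)) + (if n - k \<le> 1 then 1 else 0)"

lemma inner_sum:
  assumes M: "M \<subseteq> {1..n}"
  shows "(\<Sum>\<pi>\<in>{\<pi>. \<pi> permutes {1..n}}. if \<forall>i\<in>M. \<pi> i \<noteq> i then 1 + SG n (\<lambda>i. int (\<pi> i)) else 0)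
       = (\<Sum>K\<in>Pow M. (-1) ^ card K * wt n (card K))"
proof -
  have fM: "finite M" using M finite_subset by blast
  let ?X = "\<lambda>\<pi>. 1 + SG n (\<lambda>i. int (\<pi> i))"
  have "(\<Sum>\<pi>\<in>{\<pi>. \<pi> permutes {1..n}}. if \<forall>i\<in>M. \<pi> i \<noteq> i then ?X \<pi> else 0)
      = (\<Sum>\<pi>\<in>{\<pi>. \<pi> permutes {1..n}}. \<Sum>K\<in>Pow M. (-1) ^ card K * (if \<forall>i\<in>K. \<pi> i = i then ?X \<pi> else 0))"
  proof (rule sum.cong[OF refl])
    fix \<pi>
    have "(if \<forall>i\<in>M. \<pi> i \<noteq> i then ?X \<pi> else 0) = (if \<forall>i\<in>M. \<not> \<pi> i = i then 1 else 0) * ?X \<pi>" by simp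
    also have "\<dots> = (\<Sum>K\<in>Pow M. (-1) ^ card K * (if \<forall>i\<in>K. \<pi> i = i then 1 else 0)) * ?X \<pi>"
      by (subst indicator_expand[OF fM]) (rule refl)
    also have "\<dots> = (\<Sum>K\<in>Pow M. (-1) ^ card K * (if \<forall>i\<in>K. \<pi> i = i then ?X \<pi> else 0))"
      unfolding sum_distrib_right by (intro sum.cong refl) simp
    finally show "(if \<forall>i\<in>M. \<pi> i \<noteq> i then ?X \<pi> else 0) = (\<Sum>K\<in>Pow M. (-1) ^ card K * (if \<forall>i\<in>K. \<pi> i = i then ?X \<pi> else 0))" .
  qed
  also have "\<dots> = (\<Sum>K\<in>Pow M. \<Sum>\<pi>\<in>{\<pi>. \<pi> permutes {1..n}}. (-1) ^ card K * (if \<forall>i\<in>K. \<pi> i = i then ?X \<pi> else 0))"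
    by (rule sum.swap)
  also have "\<dots> = (\<Sum>K\<in>Pow M. (-1) ^ card K * wt n (card K))"
  proof (rule sum.cong[OF refl])
    fix K assume "K \<in> Pow M"
    then have K: "K \<subseteq> {1..n}" using M by auto
    show "(\<Sum>\<pi>\<in>{\<pi>. \<pi> permutes {1..n}}. (-1) ^ card K * (if \<forall>i\<in>K. \<pi> i = i then ?X \<pi> else 0)) = (-1) ^ card K * wt n (card K)"
      using sum_perm_fix[OF K] by (simp add: sum_distrib_left[symmetric] wt_def)
  qed
  finally show ?thesis .
qed

lemma dAD_formula:
  "4 * int (dAD n) = (\<Sum>k=0..n. int (n choose k) * ((-1) ^ k * wt n k * (2 ^ (n - k) + 0 ^ (n - k))))"
proof -
  let ?S = "{1..n}"
  let ?P = "{\<pi>. \<pi> permutes ?S}"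
  let ?SP = "signed_perms n"
  define E where "E = (\<lambda>\<sigma>. if even (lenD n \<sigma>) then 1 else (-1::int))"
  define F where "F = (\<lambda>\<sigma>. if is_derangement n \<sigma> then (1 + (-1) ^ negc n \<sigma>) * (1 + E \<sigma>) else (0::int))"
  have finSP: "finite ?SP" by (rule finite_signed_perms)
  have finS: "finite ?S" by simp
  have a: "4 * int (dAD n) = (\<Sum>\<sigma>\<in>?SP. F \<sigma>)"
  proof -
    let ?Q = "\<lambda>\<sigma>. even (negc n \<sigma>) \<and> is_derangement n \<sigma> \<and> even (lenD n \<sigma>)"
    have "F \<sigma> = (if ?Q \<sigma> then 4 else 0)" for \<sigma>
      by (auto simp: F_def E_def)
    then have "(\<Sum>\<sigma>\<in>?SP. F \<sigma>) = (\<Sum>\<sigma>\<in>?SP. if ?Q \<sigma> then 4 else 0)" by simp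
    also have "\<dots> = (\<Sum>\<sigma>\<in>{\<sigma>\<in>?SP. ?Q \<sigma>}. 4)" by (rule sum.inter_filter[OF finSP, symmetric])
    also have "{\<sigma>\<in>?SP. ?Q \<sigma>} = {\<sigma> \<in> even_signed_perms n. is_derangement n \<sigma> \<and> even (lenD n \<sigma>)}"
      by (auto simp: even_signed_perms_def)
    finally show ?thesis by (simp add: dAD_def)
  qed
  have b: "(\<Sum>\<sigma>\<in>?SP. F \<sigma>) = (\<Sum>\<pi>\<in>?P. \<Sum>N\<in>Pow ?S.
       if \<forall>i\<in>?S - N. \<pi> i \<noteq> i then (1 + (-1) ^ card N) * (1 + SG n (\<lambda>i. int (\<pi> i))) else 0)"
  proof -
    have "(\<Sum>\<sigma>\<in>?SP. F \<sigma>) = (\<Sum>p\<in>?P \<times> Pow ?S. F (case p of (\<pi>, N) \<Rightarrow> mk n \<pi> N))"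
      by (rule sum.reindex_bij_betw[OF bij_mk, symmetric])
    also have "\<dots> = (\<Sum>p\<in>?P \<times> Pow ?S. case p of (\<pi>, N) \<Rightarrow> F (mk n \<pi> N))"
      by (rule sum.cong) (auto split: prod.splits)
    also have "\<dots> = (\<Sum>\<pi>\<in>?P. \<Sum>N\<in>Pow ?S. F (mk n \<pi> N))"
      by (rule sum.cartesian_product[symmetric])
    also have "\<dots> = (\<Sum>\<pi>\<in>?P. \<Sum>N\<in>Pow ?S.
       if \<forall>i\<in>?S - N. \<pi> i \<noteq> i then (1 + (-1) ^ card N) * (1 + SG n (\<lambda>i. int (\<pi> i))) else 0)"
    proof (intro sum.cong refl)
      fix \<pi> N assume p: "\<pi> \<in> ?P" and N: "N \<in> Pow ?S"
      have pp: "\<pi> permutes ?S" using p by simp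
      have NS: "N \<subseteq> ?S" using N by simp
      have inSP: "mk n \<pi> N \<in> ?SP"
        using bij_betw_apply[OF bij_mk, of "(\<pi>, N)" n] pp NS by simp
      have "E (mk n \<pi> N) = SG n (\<lambda>i. int (\<pi> i))"
        using signed_parity[OF inSP] mk_props(3)[OF pp NS] by (simp add: E_def)
      then show "F (mk n \<pi> N) = (if \<forall>i\<in>?S - N. \<pi> i \<noteq> i then (1 + (-1) ^ card N) * (1 + SG n (\<lambda>i. int (\<pi> i))) else 0)"
        using mk_props(1,2)[OF pp NS] by (simp add: F_def)
    qed
    finally show ?thesis .
  qed
  have c: "(\<Sum>\<pi>\<in>?P. \<Sum>N\<in>Pow ?S.
       if \<forall>i\<in>?S - N. \<pi> i \<noteq> i then (1 + (-1) ^ card N) * (1 + SG n (\<lambda>i. int (\<pi> i))) else 0)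
     = (\<Sum>N\<in>Pow ?S. \<Sum>K\<in>Pow (?S - N). (1 + (-1) ^ card N) * ((-1) ^ card K * wt n (card K)))"
  proof -
    have "(\<Sum>\<pi>\<in>?P. \<Sum>N\<in>Pow ?S.
       if \<forall>i\<in>?S - N. \<pi> i \<noteq> i then (1 + (-1) ^ card N) * (1 + SG n (\<lambda>i. int (\<pi> i))) else 0)
      = (\<Sum>N\<in>Pow ?S. \<Sum>\<pi>\<in>?P.
       if \<forall>i\<in>?S - N. \<pi> i \<noteq> i then (1 + (-1) ^ card N) * (1 + SG n (\<lambda>i. int (\<pi> i))) else 0)"
      by (rule sum.swap)
    also have "\<dots> = (\<Sum>N\<in>Pow ?S. (1 + (-1) ^ card N) * (\<Sum>\<pi>\<in>?P.
       if \<forall>i\<in>?S - N. \<pi> i \<noteq> i then 1 + SG n (\<lambda>i. int (\<pi> i)) else 0))"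
      unfolding sum_distrib_left by (intro sum.cong refl) simp
    also have "\<dots> = (\<Sum>N\<in>Pow ?S. (1 + (-1) ^ card N) * (\<Sum>K\<in>Pow (?S - N). (-1) ^ card K * wt n (card K)))"
      by (rule sum.cong[OF refl]) (subst inner_sum, auto)
    finally show ?thesis by (simp add: sum_distrib_left)
  qed
  have d: "(\<Sum>N\<in>Pow ?S. \<Sum>K\<in>Pow (?S - N). (1 + (-1) ^ card N) * ((-1) ^ card K * wt n (card K)))
      = (\<Sum>K\<in>Pow ?S. ((-1) ^ card K * wt n (card K)) * (2 ^ (n - card K) + 0 ^ (n - card K)))"
  proof -
    have "(\<Sum>N\<in>Pow ?S. \<Sum>K\<in>Pow (?S - N). (1 + (-1) ^ card N) * ((-1) ^ card K * wt n (card K)))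
       = (\<Sum>K\<in>Pow ?S. \<Sum>N\<in>Pow (?S - K). (1 + (-1) ^ card N) * ((-1) ^ card K * wt n (card K)))"
      by (rule swap_disjoint[OF finS])
    also have "\<dots> = (\<Sum>K\<in>Pow ?S. ((-1) ^ card K * wt n (card K)) * (\<Sum>N\<in>Pow (?S - K). (1 + (-1) ^ card N)))"
      by (simp add: sum_distrib_left sum_distrib_right mult.commute)
    also have "\<dots> = (\<Sum>K\<in>Pow ?S. ((-1) ^ card K * wt n (card K)) * (2 ^ (n - card K) + 0 ^ (n - card K)))"
    proof (rule sum.cong[OF refl])
      fix K assume "K \<in> Pow ?S"
      then have "card (?S - K) = n - card K" by (simp add: card_Diff_subset finite_subset)
      then show "((-1) ^ card K * wt n (card K)) * (\<Sum>N\<in>Pow (?S - K). (1 + (-1) ^ card N)) =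
          ((-1) ^ card K * wt n (card K)) * (2 ^ (n - card K) + 0 ^ (n - card K))"
        using sum_even_subsets[of "?S - K"] by simp
    qed
    finally show ?thesis .
  qed
  have e: "(\<Sum>K\<in>Pow ?S. ((-1) ^ card K * wt n (card K)) * (2 ^ (n - card K) + 0 ^ (n - card K)))
     = (\<Sum>k=0..n. int (n choose k) * ((-1) ^ k * wt n k * (2 ^ (n - k) + 0 ^ (n - k))))"
    by (rule sum_Pow_card)
  show ?thesis using a b c d e by simp
qed



definition G :: "nat \<Rightarrow> int" where
  "G n = (\<Sum>k=0..n-2. int (n choose k) * (-1) ^ k * int (fact (n - k)) * 2 ^ (n - k - 2))"

lemma d_closed_int:
  assumes "n \<ge> 2"
  shows "int (dAD n) = G n + (-1) ^ (n - 1) * (int n - 1)"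
proof -
  obtain m where n: "n = m + 2" using assms by (metis add.commute le_Suc_ex)
  let ?T = "\<lambda>k. int (n choose k) * ((-1) ^ k * wt n k * (2 ^ (n - k) + 0 ^ (n - k)))"
  have "4 * int (dAD n) = (\<Sum>k=0..m+2. ?T k)" using dAD_formula[of n] n by simp
  also have "\<dots> = (\<Sum>k=0..m. ?T k) + ?T (m+1) + ?T (m+2)"
    by (simp add: add.assoc)
  also have "(\<Sum>k=0..m. ?T k) = (\<Sum>k=0..m. 4 * (int (n choose k) * (-1) ^ k * int (fact (n - k)) * 2 ^ (n - k - 2)))"
  proof (rule sum.cong[OF refl])
    fix k assume "k \<in> {0..m}"
    then have k: "k \<le> m" by simp
    have "n - k = Suc (Suc (m - k))" using k n by simp
    then have e1: "wt n k = int (fact (n - k))" and e2: "(0::int) ^ (n - k) = 0"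
      and e3: "(2::int) ^ (n - k) = 4 * 2 ^ (n - k - 2)"
      by (simp_all add: wt_def)
    show "?T k = 4 * (int (n choose k) * (-1) ^ k * int (fact (n - k)) * 2 ^ (n - k - 2))"
      by (simp add: e1 e2 e3)
  qed
  also have "\<dots> = 4 * G n" by (simp add: G_def n sum_distrib_left mult.assoc)
  also have "?T (m+1) = 4 * int n * (-1) ^ (m+1)"
    using n by (simp add: wt_def)
  also have "?T (m+2) = 4 * (-1) ^ (m+2)"
    using n by (simp add: wt_def)
  finally have "4 * int (dAD n) = 4 * G n + 4 * int n * (-1) ^ (m+1) + 4 * (-1) ^ (m+2)" .
  then have "int (dAD n) = G n + int n * (-1) ^ (m+1) + (-1) ^ (m+2)" by simp
  then show ?thesis using n by (simp add: algebra_simps)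
qed

definition R :: "nat \<Rightarrow> real" where
  "R n = (\<Sum>k=0..n-2. 2 ^ (n - k - 2) * (-1) ^ k / fact k)"

lemma G_real: "real_of_int (G n) = fact n * R n"
  unfolding G_def R_def of_int_sum sum_distrib_left
proof (rule sum.cong[OF refl])
  fix k assume "k \<in> {0..n-2}"
  then have k: "k \<le> n" by auto
  have b: "real (n choose k) = fact n / (fact k * fact (n - k))" using binomial_fact[OF k] by simp
  show "real_of_int (int (n choose k) * (- 1) ^ k * int (fact (n - k)) * 2 ^ (n - k - 2)) =
        fact n * (2 ^ (n - k - 2) * (- 1) ^ k / fact k)"
    by (simp add: b field_simps)
qed

lemma d_closed_real:
  assumes "n \<ge> 2"
  shows "real (dAD n) = fact n * (\<Sum>k=0..n-2. 2 ^ (n - k - 2) * (-1) ^ k / fact k) + (-1) ^ (n - 1) * (real n - 1)"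
proof -
  have "real (dAD n) = real_of_int (int (dAD n))" by simp
  also have "\<dots> = real_of_int (G n) + (-1) ^ (n - 1) * (real n - 1)"
    using d_closed_int[OF assms] by simp
  finally show ?thesis using G_real by (simp add: R_def)
qed



lemma R_rec:
  assumes "n \<ge> 2"
  shows "R (Suc n) = 2 * R n + (-1) ^ (n - 1) / fact (n - 1)"
proof -
  obtain m where n: "n = m + 2" using assms by (metis add.commute le_Suc_ex)
  have "R (Suc n) = (\<Sum>k=0..Suc m. 2 ^ (m + 1 - k) * (-1) ^ k / fact k)"
    by (simp add: R_def n)
  also have "\<dots> = (\<Sum>k=0..m. 2 ^ (m + 1 - k) * (-1) ^ k / fact k) + (-1) ^ (Suc m) / fact (Suc m)"
    by simp
  also have "(\<Sum>k=0..m. 2 ^ (m + 1 - k) * (-1) ^ k / fact k :: real) = 2 * (\<Sum>k=0..m. 2 ^ (m - k) * (-1) ^ k / fact k)"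
    unfolding sum_distrib_left
  proof (rule sum.cong[OF refl])
    fix k assume "k \<in> {0..m}"
    then have "m + 1 - k = Suc (m - k)" by auto
    then show "2 ^ (m + 1 - k) * (-1) ^ k / fact k = 2 * (2 ^ (m - k) * (-1) ^ k / (fact k :: real))"
      by simp
  qed
  finally show ?thesis by (simp add: R_def n)
qed

lemma dAD_1: "dAD 1 = 0"
proof -
  have "4 * int (dAD 1) = (\<Sum>k=0..1. int (1 choose k) * ((-1) ^ k * wt 1 k * (2 ^ (1 - k) + 0 ^ (1 - k))))"
    by (rule dAD_formula)
  also have "\<dots> = 0" by (simp add: wt_def)
  finally show ?thesis by simp
qed

lemma dAD_2: "dAD 2 = 1"
proof -
  have "real (dAD 2) = fact 2 * (\<Sum>k=0..2-2. 2 ^ (2 - k - 2) * (-1) ^ k / fact k) + (-1) ^ (2 - 1) * (real 2 - 1)"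
    by (rule d_closed_real) simp
  also have "\<dots> = 1" by simp
  finally show ?thesis by simp
qed

lemma rec2:
  assumes "n \<ge> 2"
  shows "int (dAD n) = 2 * int n * int (dAD (n - 1)) + (-1) ^ (n - 1) * (int n ^ 2 - 2 * int n - 1)"
proof (cases "n = 2")
  case True then show ?thesis using dAD_1 dAD_2 by simp
next
  case False
  define j where "j = n - 2"
  have n: "n = Suc (Suc j)" using assms by (simp add: j_def)
  have m: "Suc j \<ge> 2" using assms False by (simp add: j_def)
  define a where "a = real (Suc j)"
  define x where "x = fact (Suc j) * R (Suc j)"
  define s where "s = ((-1::real) ^ j)"
  have dn: "real (dAD n) = fact n * R n + (-1) ^ (n - 1) * (real n - 1)"
    using d_closed_real[OF assms] by (simp add: R_def)
  have dm: "real (dAD (Suc j)) = fact (Suc j) * R (Suc j) + (-1) ^ j * (real (Suc j) - 1)"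
    using d_closed_real[OF m] by (simp add: R_def)
  have fm: "fact (Suc j) = a * fact j" by (simp add: a_def)
  have fn: "fact (Suc (Suc j)) = (a + 1) * fact (Suc j)" by (simp add: a_def)
  have Rr: "R (Suc (Suc j)) = 2 * R (Suc j) + (-1) ^ (Suc j - 1) / fact (Suc j - 1)" by (rule R_rec[OF m])
  have Rn: "R (Suc (Suc j)) = 2 * R (Suc j) + s / fact j" using Rr by (simp add: n s_def)
  have fj: "fact j \<noteq> (0::real)" by simp
  have dn': "real (dAD n) = (a + 1) * (2 * x) + (a + 1) * a * s - s * a"
  proof -
    have "real (dAD n) = (a + 1) * fact (Suc j) * (2 * R (Suc j) + s / fact j) - s * a"
      using dn unfolding n fn Rn by (simp add: s_def a_def)
    also have "(a + 1) * fact (Suc j) * (2 * R (Suc j) + s / fact j) = (a + 1) * (2 * x) + (a + 1) * (fact (Suc j) * s / fact j)"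
    proof -
      have gen: "(a + 1) * F * (2 * R' + s / fj) = (a + 1) * (2 * (F * R')) + (a + 1) * (F * s / fj)" for F R' fj :: real
        by (simp add: algebra_simps add_divide_distrib)
      show ?thesis unfolding x_def by (rule gen)
    qed
    also have "fact (Suc j) * s / fact j = a * s" using fj by (simp add: a_def)
    finally show ?thesis by (simp add: algebra_simps)
  qed
  have dm': "real (dAD (Suc j)) = x + s * (a - 1)"
    using dm by (simp add: x_def s_def a_def)
  have "real (dAD n) = 2 * (a + 1) * real (dAD (Suc j)) + (- s) * ((a + 1)^2 - 2 * (a + 1) - 1)"
    unfolding dn' dm' by (simp add: algebra_simps power2_eq_square)
  then have "real_of_int (int (dAD n)) = real_of_int (2 * int n * int (dAD (n - 1)) + (-1) ^ (n - 1) * (int n ^ 2 - 2 * int n - 1))"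
    by (simp add: n a_def s_def)
  then show ?thesis by (rule of_int_eq_iff[THEN iffD1])
qed

lemma rec3:
  assumes "n \<ge> 3"
  shows "int (dAD n) = (2 * int n - 1) * int (dAD (n - 1)) + 2 * (int n - 1) * int (dAD (n - 2)) + (-1) ^ (n - 1) * (2 * int n - 3)"
proof -
  define m where "m = n - 2"
  have n: "n = Suc (Suc m)" using assms by (simp add: m_def)
  have r1: "int (dAD n) = 2 * int n * int (dAD (n - 1)) + (-1) ^ (n - 1) * (int n ^ 2 - 2 * int n - 1)"
    using rec2 assms by simp
  have r2: "int (dAD (n - 1)) = 2 * int (n - 1) * int (dAD (n - 2)) + (-1) ^ (n - 2) * (int (n - 1) ^ 2 - 2 * int (n - 1) - 1)"
    using rec2[of "n - 1"] assms by (simp add: n)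
  show ?thesis using r1 r2 n by (simp add: algebra_simps power2_eq_square)
qed


theorem theorem1p3:
  shows "(\<forall>n\<ge>2. real (dAD n) =
            fact n * (\<Sum>k=0..n-2. 2 ^ (n - k - 2) * (-1) ^ k / fact k)
            + (-1) ^ (n - 1) * (real n - 1))
       \<and> ((\<forall>n\<ge>2. int (dAD n) = 2 * int n * int (dAD (n - 1))
                 + (-1) ^ (n - 1) * (int n ^ 2 - 2 * int n - 1)) \<and> dAD 1 = 0)
       \<and> ((\<forall>n\<ge>3. int (dAD n) = (2 * int n - 1) * int (dAD (n - 1))
                 + 2 * (int n - 1) * int (dAD (n - 2)) + (-1) ^ (n - 1) * (2 * int n - 3))
           \<and> dAD 1 = 0 \<and> dAD 2 = 1)"
  using d_closed_real rec2 rec3 dAD_1 dAD_2 by blast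

end
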